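(* There is a set $E$ of natural numbers with $|\{n\in E: n\le x\}| = o(x/\log x)$ as $x\to\infty$ such that, for $n\notin E$, $$ \sum_{m\ge 2}\frac1m\sum_{\substack{q \text{ prime}\\ q^m\equiv \pm1 \ (\mathrm{mod}\ n)}}\frac{1}{q^m} = o\left(\frac1n\right) \quad (n\to\infty). $$
   Context: The inner sum runs over primes $q$ with $q^m\equiv 1$ or $q^m\equiv -1 \pmod n$. *)

theory Defs
  imports "HOL-Analysis.Analysis" "HOL-Number_Theory.Number_Theory" "HOL-Library.Landau_Symbols"
begin

definition pm_primes :: "nat \<Rightarrow> nat \<Rightarrow> nat set" where
  "pm_primes n m = {q. prime q \<and> ([int q ^ m = 1] (mod int n) \<or> [int q ^ m = -1] (mod int n))}"

definition S :: "nat \<Rightarrow> real" where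
  "S n = (\<Sum>\<^sub>\<infinity> m\<in>{2..}. (1 / real m) * (\<Sum>\<^sub>\<infinity> q\<in>pm_primes n m. 1 / real q ^ m))"

end

theory Submission
  imports Defs "HOL-Real_Asymp.Real_Asymp"
begin


definition tau :: "nat \<Rightarrow> nat" where "tau M = card {d. d dvd M}"

lemma tau_prime_mult: assumes "prime p" "N > 0" shows "tau (p * N) \<le> 2 * tau N"
proof -
  have "{d. d dvd p * N} \<subseteq> {d. d dvd N} \<union> (\<lambda>d. p * d) ` {d. d dvd N}"
  proof
    fix d assume "d \<in> {d. d dvd p * N}"
    then have "d dvd p * N" by simp
    then obtain b c where bc: "d = b * c" "b dvd p" "c dvd N" using division_decomp by blast
    from bc(2) assms(1) have "b = 1 \<or> b = p" using prime_nat_iff by blast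
    then show "d \<in> {d. d dvd N} \<union> (\<lambda>d. p * d) ` {d. d dvd N}" using bc by auto
  qed
  moreover have fin: "finite {d. d dvd N}" using assms(2) by simp
  ultimately have "tau (p*N) \<le> card ({d. d dvd N} \<union> (\<lambda>d. p * d) ` {d. d dvd N})"
    unfolding tau_def by (intro card_mono) auto
  also have "\<dots> \<le> card {d. d dvd N} + card ((\<lambda>d. p * d) ` {d. d dvd N})" by (rule card_Un_le)
  also have "\<dots> \<le> tau N + tau N" unfolding tau_def by (intro add_mono order.refl card_image_le fin)
  finally show ?thesis by simp
qed

lemma tau_primepow_mult: assumes "prime p" "N > 0" shows "tau (p ^ e * N) \<le> (e + 1) * tau N"
proof -
  have "{d. d dvd p ^ e * N} \<subseteq> (\<lambda>(i,d). p ^ i * d) ` ({0..e} \<times> {d. d dvd N})"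
  proof
    fix d assume "d \<in> {d. d dvd p ^ e * N}"
    then have "d dvd p ^ e * N" by simp
    then obtain b c where bc: "d = b * c" "b dvd p ^ e" "c dvd N" using division_decomp by blast
    from bc(2) assms(1) obtain i where "i \<le> e" "b = p ^ i" using divides_primepow_nat by blast
    then show "d \<in> (\<lambda>(i,d). p ^ i * d) ` ({0..e} \<times> {d. d dvd N})" using bc
      by (intro image_eqI[of _ _ "(i, c)"]) auto
  qed
  moreover have fin: "finite {d. d dvd N}" using assms(2) by simp
  ultimately have "tau (p ^ e * N) \<le> card ((\<lambda>(i,d). p ^ i * d) ` ({0..e} \<times> {d. d dvd N}))"
    unfolding tau_def by (intro card_mono) auto
  also have "\<dots> \<le> card ({0..e} \<times> {d. d dvd N})" by (intro card_image_le) (use fin in auto)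
  also have "\<dots> = (e + 1) * tau N" unfolding tau_def by (simp add: card_cartesian_product)
  finally show ?thesis .
qed

lemma tau_coprime6: "B > 0 \<Longrightarrow> coprime B 6 \<Longrightarrow> tau B ^ 9 \<le> B ^ 4"
proof (induction B rule: less_induct)
  case (less B)
  show ?case
  proof (cases "B = 1")
    case True then show ?thesis by (simp add: tau_def)
  next
    case False
    then obtain p where p: "prime p" "p dvd B" using prime_factor_nat by blast
    then obtain B' where B': "B = p * B'" by blast
    have "B' > 0" using less.prems B' by auto
    have n2: "\<not> 2 dvd B" and n3: "\<not> 3 dvd B"
    proof -
      have "is_unit (2::nat)" if "2 dvd B" using less.prems(2) that
        by (rule coprime_common_divisor) simp
      then show "\<not> 2 dvd B" by auto
      have "is_unit (3::nat)" if "3 dvd B" using less.prems(2) that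
        by (rule coprime_common_divisor) simp
      then show "\<not> 3 dvd B" by auto
    qed
    have "p \<noteq> 2" "p \<noteq> 3" using p n2 n3 by auto
    moreover have "p \<ge> 2" using p prime_ge_2_nat by blast
    moreover have "p \<noteq> 4"
    proof
      assume "p = 4" then have "2 dvd p" by simp
      then show False using p(2) n2 dvd_trans by blast
    qed
    ultimately have p5: "p \<ge> 5" by linarith
    have "B' < B" using B' p5 \<open>B' > 0\<close> by simp
    moreover have "coprime B' 6" using less.prems B' by simp
    ultimately have IH: "tau B' ^ 9 \<le> B' ^ 4" using less.IH \<open>B' > 0\<close> by blast
    have "tau B \<le> 2 * tau B'" using tau_prime_mult[OF p(1) \<open>B'>0\<close>] B' by simp
    then have "tau B ^ 9 \<le> (2 * tau B') ^ 9" by (rule power_mono) simp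
    also have "\<dots> = 512 * tau B' ^ 9" by (simp only: power_mult_distrib) simp
    also have "\<dots> \<le> 512 * B' ^ 4" using IH by simp
    also have "\<dots> \<le> p ^ 4 * B' ^ 4"
    proof -
      have "5^4 \<le> p ^ 4" using p5 power_mono by blast
      then show ?thesis by simp
    qed
    also have "\<dots> = B ^ 4" using B' by (simp add: power_mult_distrib)
    finally show ?thesis .
  qed
qed


lemma pow9_bound: "(a + 1 :: nat) ^ 9 \<le> 100 * 16 ^ a"
proof (cases "a \<ge> 2")
  case False
  then have "a = 0 \<or> a = 1" by auto
  then show ?thesis
  proof
    assume "a = 0" then show ?thesis by simp
  next
    assume h: "a = 1"
    have e: "a + 1 = 2" using h by simp
    show ?thesis unfolding e h power_one_right by (simp add: eval_nat_numeral)
  qed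
next
  case True
  then show ?thesis
  proof (induction a rule: dec_induct)
    case base then show ?case by simp
  next
    case (step a)
    have "3 * (a + 2) \<le> 4 * (a + 1)" using step.hyps by simp
    then have "(3 * (a + 2)) ^ 9 \<le> (4 * (a + 1)) ^ 9" by (rule power_mono) simp
    then have "3 ^ 9 * (a + 2) ^ 9 \<le> 4 ^ 9 * (a + 1) ^ 9" by (simp only: power_mult_distrib)
    moreover have "(3::nat) ^ 9 = 19683" "(4::nat) ^ 9 = 262144" by simp_all
    ultimately have "19683 * (a + 2) ^ 9 \<le> 262144 * (a + 1) ^ 9" by (simp only:)
    then have "(a + 2) ^ 9 \<le> 16 * (a + 1) ^ 9" by linarith
    also have "\<dots> \<le> 16 * (100 * 16 ^ a)" using step.IH by simp
    finally show ?case by simp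
  qed
qed



lemma coprime6: "\<not> 2 dvd (B::nat) \<Longrightarrow> \<not> 3 dvd B \<Longrightarrow> coprime B 6"
proof -
  assume a: "\<not> 2 dvd (B::nat)" "\<not> 3 dvd B"
  have "coprime 2 B" using a(1) by (intro prime_imp_coprime) auto
  moreover have "coprime 3 B" using a(2) by (intro prime_imp_coprime) auto
  ultimately have "coprime B 2" "coprime B 3" by (auto simp: coprime_commute)
  then have "coprime B (2 * 3)" by (simp only: coprime_mult_right_iff)
  then show ?thesis by simp
qed



lemma tau_bound9: assumes "M > 0" shows "tau M ^ 9 \<le> 10000 * M ^ 4"
proof -
  obtain M1 where M1: "M = 2 ^ multiplicity 2 M * M1" "\<not> 2 dvd M1"
    by (rule multiplicity_decompose'[where p=2 and x=M]) (use assms in auto)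
  have "M1 \<noteq> 0"
  proof
    assume "M1 = 0" with M1(2) show False by simp
  qed
  obtain B where B: "M1 = 3 ^ multiplicity 3 M1 * B" "\<not> 3 dvd B"
    by (rule multiplicity_decompose'[where p=3 and x=M1]) (use \<open>M1 \<noteq> 0\<close> in auto)
  define a where "a = multiplicity 2 M"
  define b where "b = multiplicity 3 M1"
  have M1': "M = 2 ^ a * M1" and B': "M1 = 3 ^ b * B" using M1 B a_def b_def by auto
  have "M1 > 0" using \<open>M1 \<noteq> 0\<close> by simp
  have "B \<noteq> 0"
  proof
    assume "B = 0" with B(2) show False by simp
  qed
  then have "B > 0" by simp
  have "\<not> 2 dvd B" using M1(2) B' by auto
  then have cop: "coprime B 6" using B(2) coprime6 by blast
  have t1: "tau M \<le> (a + 1) * tau M1" using M1' tau_primepow_mult[OF two_is_prime_nat \<open>M1 > 0\<close>] by simp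
  have t2: "tau M1 \<le> (b + 1) * tau B" using B' tau_primepow_mult[of 3 B b] \<open>B > 0\<close> by simp
  have "tau M \<le> (a + 1) * ((b + 1) * tau B)" using t1 t2 by (meson le_trans mult_le_mono2)
  then have "tau M ^ 9 \<le> ((a + 1) * ((b + 1) * tau B)) ^ 9" by (rule power_mono) simp
  also have "\<dots> = (a + 1) ^ 9 * ((b + 1) ^ 9 * tau B ^ 9)" by (simp only: power_mult_distrib)
  also have "\<dots> \<le> (100 * 16 ^ a) * ((100 * 16 ^ b) * B ^ 4)"
    using pow9_bound[of a] pow9_bound[of b] tau_coprime6[OF \<open>B > 0\<close> cop]
    by (intro mult_le_mono) auto
  also have "\<dots> \<le> (100 * 16 ^ a) * ((100 * 81 ^ b) * B ^ 4)"
    by (intro mult_le_mono order.refl power_mono) auto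
  also have "\<dots> = 10000 * ((2 ^ a) ^ 4 * (3 ^ b) ^ 4 * B ^ 4)"
  proof -
    have e1: "((2::nat) ^ a) ^ 4 = 16 ^ a"
    proof -
      have "((2::nat) ^ a) ^ 4 = (2 ^ 4) ^ a" by (simp only: power_mult[symmetric] mult.commute)
      then show ?thesis by simp
    qed
    have e2: "((3::nat) ^ b) ^ 4 = 81 ^ b"
    proof -
      have "((3::nat) ^ b) ^ 4 = (3 ^ 4) ^ b" by (simp only: power_mult[symmetric] mult.commute)
      then show ?thesis by simp
    qed
    show ?thesis unfolding e1 e2 by simp
  qed
  also have "\<dots> = 10000 * M ^ 4" using M1' B' by (simp add: power_mult_distrib)
  finally show ?thesis .
qed



lemma tau_bound: assumes "M > 0" shows "real (tau M) \<le> 3 * real M powr (4/9)"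
proof -
  have "real (tau M) ^ 9 \<le> 10000 * real M ^ 4"
    proof -
    have "real (tau M ^ 9) \<le> real (10000 * M ^ 4)" using tau_bound9[OF assms] by (simp only: of_nat_le_iff)
    then show ?thesis by simp
  qed
  also have "\<dots> \<le> 19683 * real M ^ 4" by simp
  also have "\<dots> = (3 * real M powr (4/9)) ^ 9"
  proof -
    have pos: "real M > 0" using assms by simp
    have "(real M powr (4/9)) ^ 9 = (real M powr (4/9)) powr (real 9)"
      using pos by (subst powr_realpow) auto
    also have "\<dots> = real M powr 4" by (simp add: powr_powr)
    also have "\<dots> = real M ^ 4" using pos by (subst powr_realpow[symmetric]) auto
    finally have "(real M powr (4/9)) ^ 9 = real M ^ 4" .
    then show ?thesis by (simp add: power_mult_distrib)
  qed
  finally have "real (tau M) ^ 9 \<le> (3 * real M powr (4/9)) ^ 9" .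
  then have "real (tau M) ^ Suc 8 \<le> (3 * real M powr (4/9)) ^ Suc 8" by simp
  then show ?thesis
    by (rule power_le_imp_le_base) auto
qed




definition rr :: real where "rr = 2 powr (-(19/36))"

lemma rr_pos: "0 < rr" and rr_lt1: "rr < 1"
proof -
  show "0 < rr" unfolding rr_def by simp
  have "(2::real) powr (-(19/36)) < 2 powr 0" by (intro powr_less_mono) auto
  then show "rr < 1" unfolding rr_def by simp
qed

lemma G_point:
  assumes "a \<ge> 2" "m \<ge> 2"
  shows "real a powr (-(19/36 * real m)) \<le> real a powr (-(19/18)) * (rr ^ m / rr ^ 2)"
proof -
  have a0: "real a > 0" using assms by simp
  have "real a powr (-(19/36 * real m)) = real a powr (-(19/18)) * real a powr (-(19/36 * (real m - 2)))"
  proof -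
    have "-(19/36 * real m) = -(19/18) + -(19/36 * (real m - 2))" by (simp add: field_simps)
    then show ?thesis by (simp only: powr_add)
  qed
  also have "real a powr (-(19/36 * (real m - 2))) \<le> 2 powr (-(19/36 * (real m - 2)))"
    using assms by (intro powr_mono2') auto
  also have "(2::real) powr (-(19/36 * (real m - 2))) = rr ^ m / rr ^ 2"
  proof -
    have e1: "rr ^ m = 2 powr (real m * (-(19/36)))" unfolding rr_def by (subst powr_power) auto
    have e2: "rr ^ 2 = 2 powr (real 2 * (-(19/36)))" unfolding rr_def by (subst powr_power) auto
    have "rr ^ m / rr ^ 2 = 2 powr (real m * (-(19/36))) / 2 powr (real 2 * (-(19/36)))"
      using e1 e2 by (simp only:)
    also have "\<dots> = 2 powr (real m * (-(19/36)) - real 2 * (-(19/36)))" by (rule powr_diff[symmetric])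
    also have "real m * (-(19/36)) - real 2 * (-(19/36)) = -(19/36 * (real m - 2))" by (simp add: field_simps)
    finally show ?thesis by simp
  qed
  finally show ?thesis by (simp add: mult_left_mono)
qed

definition Zc :: real where "Zc = suminf (\<lambda>a::nat. real a powr (-(19/18)))"

lemma Z_summable: "summable (\<lambda>a::nat. real a powr (-(19/18)))"
  by (subst summable_real_powr_iff) simp

lemma G_finite_bound:
  assumes "finite F" "F \<subseteq> {2..} \<times> {2..}"
  shows "(\<Sum>(m,a)\<in>F. real a powr (-(19/36 * real m))) \<le> Zc * (1 / (1 - rr)) / rr ^ 2"
proof -
  define N where "N = Max (insert 0 (fst ` F \<union> snd ` F))"
  have FN: "F \<subseteq> {2..N} \<times> {2..N}"
  proof
    fix x assume "x \<in> F"
    then have "fst x \<le> N" "snd x \<le> N" unfolding N_def using assms(1) by (auto intro!: Max_ge)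
    then show "x \<in> {2..N} \<times> {2..N}" using \<open>x \<in> F\<close> assms(2) by (cases x) auto
  qed
  have "(\<Sum>(m,a)\<in>F. real a powr (-(19/36 * real m))) \<le> (\<Sum>(m,a)\<in>{2..N} \<times> {2..N}. real a powr (-(19/36 * real m)))"
    by (intro sum_mono2 FN) auto
  also have "\<dots> = (\<Sum>m\<in>{2..N}. \<Sum>a\<in>{2..N}. real a powr (-(19/36 * real m)))"
    by (simp add: sum.cartesian_product)
  also have "\<dots> \<le> (\<Sum>m\<in>{2..N}. \<Sum>a\<in>{2..N}. real a powr (-(19/18)) * (rr ^ m / rr ^ 2))"
    by (intro sum_mono G_point) auto
  also have "\<dots> = (\<Sum>m\<in>{2..N}. rr ^ m) * (\<Sum>a\<in>{2..N}. real a powr (-(19/18))) / rr ^ 2"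
    by (simp only: sum_distrib_right) (simp add: sum_distrib_left sum_divide_distrib mult.commute)
  also have "\<dots> \<le> (1 / (1 - rr)) * Zc / rr ^ 2"
  proof -
    have "(\<Sum>a\<in>{2..N}. real a powr (-(19/18))) \<le> Zc"
      unfolding Zc_def by (intro sum_le_suminf Z_summable) auto
    moreover have "(\<Sum>m\<in>{2..N}. rr ^ m) \<le> 1 / (1 - rr)"
    proof -
      have "(\<Sum>m\<in>{2..N}. rr ^ m) \<le> suminf (\<lambda>m. rr ^ m)"
        using rr_pos rr_lt1 by (intro sum_le_suminf summable_geometric) auto
      then show ?thesis using rr_pos rr_lt1 by (simp add: suminf_geometric)
    qed
    moreover have "0 \<le> (\<Sum>a\<in>{2..N}. real a powr (-(19/18)))" "0 \<le> (\<Sum>m\<in>{2..N}. rr ^ m)"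
      using rr_pos by (auto intro!: sum_nonneg)
    ultimately show ?thesis using rr_pos rr_lt1
      by (intro divide_right_mono mult_mono) auto
  qed
  finally show ?thesis by (simp add: mult.commute)
qed

lemma G_summable: "(\<lambda>(m,a). real a powr (-(19/36 * real m))) summable_on ({2..} \<times> {2..})"
proof (rule nonneg_bdd_above_summable_on)
  show "bdd_above (sum (\<lambda>(m,a). real a powr (-(19/36 * real m))) ` {F. F \<subseteq> {2..} \<times> {2..} \<and> finite F})"
    using G_finite_bound by (intro bdd_aboveI[where M="Zc * (1 / (1 - rr)) / rr ^ 2"]) auto
qed auto



abbreviation G :: "nat \<times> nat \<Rightarrow> real" where
  "G \<equiv> (\<lambda>(m,a). real a powr (-(19/36 * real m)))"

definition PP :: "(nat \<times> nat) set" where "PP = {2..} \<times> {q. prime q}"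

lemma PP_sub: "PP \<subseteq> {2..} \<times> {2..}"
  unfolding PP_def using prime_ge_2_nat by auto

lemma G_summable_PP: "G summable_on PP"
  using G_summable PP_sub by (rule summable_on_subset_banach)

lemma inv_pow_le_G:
  assumes "a \<ge> 2"
  shows "1 / real a ^ m \<le> real a powr (-(19/36 * real m))"
proof -
  have a0: "real a > 0" using assms by simp
  have "1 / real a ^ m = real a powr (- real m)"
    using a0 by (simp add: powr_minus powr_realpow divide_inverse)
  also have "\<dots> \<le> real a powr (-(19/36 * real m))"
    using assms by (intro powr_mono) auto
  finally show ?thesis .
qed

lemma pm_sub: "Sigma {2..} (pm_primes n) \<subseteq> PP"
  unfolding PP_def pm_primes_def by auto

definition phi :: "nat \<Rightarrow> nat \<times> nat \<Rightarrow> real" where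
  "phi n x = (if snd x \<in> pm_primes n (fst x) then real n * (1 / real (fst x) * (1 / real (snd x) ^ fst x)) else 0)"

lemma f_le_G:
  assumes "x \<in> PP"
  shows "1 / real (fst x) * (1 / real (snd x) ^ fst x) \<le> G x"
proof -
  obtain m q where x: "x = (m,q)" "m \<ge> 2" "prime q" using assms unfolding PP_def by auto
  have q2: "q \<ge> 2" using x prime_ge_2_nat by auto
  have "1 / real m * (1 / real q ^ m) \<le> 1 * (1 / real q ^ m)"
    using x by (intro mult_right_mono) auto
  also have "\<dots> \<le> G (m,q)" using inv_pow_le_G[OF q2] by simp
  finally show ?thesis using x by simp
qed

lemma S_eq: "real n * S n = infsum (phi n) PP"
proof -
  define f where "f = (\<lambda>x::nat\<times>nat. 1 / real (fst x) * (1 / real (snd x) ^ fst x))"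
  have fsum: "f summable_on Sigma {2..} (pm_primes n)"
  proof (rule summable_on_comparison_test)
    show "G summable_on Sigma {2..} (pm_primes n)"
      using G_summable_PP pm_sub by (rule summable_on_subset_banach)
    show "f x \<le> G x" if "x \<in> Sigma {2..} (pm_primes n)" for x
      using f_le_G[of x] pm_sub that unfolding f_def by auto
    show "0 \<le> f x" for x unfolding f_def by simp
  qed
  have "S n = infsum (\<lambda>m. infsum (\<lambda>q. 1 / real m * (1 / real q ^ m)) (pm_primes n m)) {2..}"
    unfolding S_def by (intro infsum_cong) (rule infsum_cmult_right'[symmetric])
  also have "\<dots> = infsum (\<lambda>m. infsum (\<lambda>q. f (m,q)) (pm_primes n m)) {2..}"
    unfolding f_def by simp
  also have "\<dots> = infsum f (Sigma {2..} (pm_primes n))"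
    using fsum by (rule infsum_Sigma_banach)
  finally have "real n * S n = infsum (\<lambda>x. real n * f x) (Sigma {2..} (pm_primes n))"
    by (simp add: infsum_cmult_right')
  also have "\<dots> = infsum (phi n) PP"
  proof (rule infsum_cong_neutral)
    show "phi n x = 0" if "x \<in> PP - Sigma {2..} (pm_primes n)" for x
      using that unfolding phi_def PP_def by (cases x) auto
  next
    show "real n * f x = 0" if "x \<in> Sigma {2..} (pm_primes n) - PP" for x
      using that pm_sub by auto
  next
    show "real n * f x = phi n x" if "x \<in> Sigma {2..} (pm_primes n) \<inter> PP" for x
      using that unfolding phi_def f_def by (cases x) auto
  qed
  finally show ?thesis .
qed

lemma phi_summable: "phi n summable_on PP"
proof (rule summable_on_comparison_test)
  show "(\<lambda>x. real n * G x) summable_on PP"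
    using G_summable_PP by (rule summable_on_cmult_right)
  show "phi n x \<le> real n * G x" if "x \<in> PP" for x
  proof (cases "snd x \<in> pm_primes n (fst x)")
    case True
    then show ?thesis using f_le_G[OF that] unfolding phi_def by (simp only: if_True) (rule mult_left_mono, auto)
  next
    case False
    have "0 \<le> G x" by (cases x) simp
    then show ?thesis using False unfolding phi_def by simp
  qed
  show "0 \<le> phi n x" for x unfolding phi_def by simp
qed

lemma S_nonneg: "S n \<ge> 0"
  unfolding S_def by (intro infsum_nonneg mult_nonneg_nonneg) (auto intro!: infsum_nonneg)

lemma infsum_finite_sum:
  fixes f :: "'i \<Rightarrow> 'a \<Rightarrow> real"
  assumes "finite I" "\<And>i. i \<in> I \<Longrightarrow> f i summable_on A"
  shows "(\<lambda>x. \<Sum>i\<in>I. f i x) summable_on A \<and> (\<Sum>i\<in>I. infsum (f i) A) = infsum (\<lambda>x. \<Sum>i\<in>I. f i x) A"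
  using assms
proof (induction I rule: finite_induct)
  case empty then show ?case by simp
next
  case (insert i I)
  then have IH: "(\<lambda>x. \<Sum>i\<in>I. f i x) summable_on A" "(\<Sum>i\<in>I. infsum (f i) A) = infsum (\<lambda>x. \<Sum>i\<in>I. f i x) A"
    by auto
  have fi: "f i summable_on A" using insert by auto
  show ?case
    using insert.hyps IH fi by (simp add: summable_on_add infsum_add)
qed



lemma div_sum_bound:
  assumes "M > 0" "N \<ge> 1"
  shows "(\<Sum>n\<in>{1..N}. if n dvd M then real n else 0) \<le> 3 * real N powr (35/36) * real M powr (17/36)"
proof -
  define B where "B = real N powr (35/36) * real M powr (1/36)"
  have pt: "real n \<le> B" if "n \<in> {1..N}" "n dvd M" for n
  proof -
    have n0: "real n > 0" using that by simp
    have nM: "n \<le> M" using that assms by (simp add: dvd_imp_le)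
    have "real n = real n powr (35/36 + 1/36)" using n0 by simp
    also have "\<dots> = real n powr (35/36) * real n powr (1/36)" by (rule powr_add)
    also have "\<dots> \<le> B" unfolding B_def using that nM n0
      by (intro mult_mono powr_mono2) auto
    finally show ?thesis .
  qed
  have "(\<Sum>n\<in>{1..N}. if n dvd M then real n else 0) = (\<Sum>n\<in>{n\<in>{1..N}. n dvd M}. real n)"
    by (rule sum.inter_filter[symmetric]) simp
  also have "\<dots> \<le> (\<Sum>n\<in>{n\<in>{1..N}. n dvd M}. B)" using pt by (intro sum_mono) auto
  also have "\<dots> \<le> (\<Sum>n\<in>{d. d dvd M}. B)"
    using assms unfolding B_def by (intro sum_mono2) auto
  also have "\<dots> = real (tau M) * B" unfolding tau_def by simp
  also have "\<dots> \<le> (3 * real M powr (4/9)) * B"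
    using tau_bound[OF assms(1)] unfolding B_def by (intro mult_right_mono) auto
  also have "\<dots> = 3 * real N powr (35/36) * (real M powr (4/9) * real M powr (1/36))"
    unfolding B_def by (simp add: ac_simps)
  also have "real M powr (4/9) * real M powr (1/36) = real M powr (17/36)"
    by (subst powr_add[symmetric]) simp
  finally show ?thesis .
qed

lemma pm_dvd:
  assumes "q \<in> pm_primes n m"
  shows "n dvd q ^ m - 1 \<or> n dvd q ^ m + 1"
proof -
  have qp: "prime q" using assms unfolding pm_primes_def by auto
  then have "q > 0" using prime_gt_0_nat by blast
  then have q1: "q ^ m \<ge> 1" by (simp add: Suc_le_eq)
  from assms consider "[int q ^ m = 1] (mod int n)" | "[int q ^ m = -1] (mod int n)"
    unfolding pm_primes_def by auto
  then show ?thesis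
  proof cases
    case 1
    then have "int n dvd int q ^ m - 1" by (simp add: cong_iff_dvd_diff)
    also have "int q ^ m - 1 = int (q ^ m - 1)" using q1 by (simp add: of_nat_diff)
    finally show ?thesis by (simp only: int_dvd_int_iff) simp
  next
    case 2
    then have "int n dvd int q ^ m - (-1)" by (simp add: cong_iff_dvd_diff)
    also have "int q ^ m - (-1) = int (q ^ m + 1)" by simp
    finally show ?thesis by (simp only: int_dvd_int_iff) simp
  qed
qed

lemma phi_sum_bound:
  assumes "x \<in> PP" "N \<ge> 1"
  shows "(\<Sum>n\<in>{1..N}. phi n x) \<le> 12 * real N powr (35/36) * G x"
proof -
  obtain m q where x: "x = (m,q)" "m \<ge> 2" "prime q" using assms unfolding PP_def by auto
  have q2: "q \<ge> 2" using x prime_ge_2_nat by auto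
  define Q where "Q = q ^ m"
  have Q4: "Q \<ge> 4"
  proof -
    have "2 ^ 2 \<le> q ^ m" using q2 x(2) by (meson le_trans power_increasing power_mono one_le_numeral zero_le_numeral le_trans[OF _ power_increasing])
    then show ?thesis unfolding Q_def by simp
  qed
  have RQ: "real Q > 0" using Q4 by simp
  define D where "D = (\<lambda>M n. if n dvd M then real n else 0)"
  have pt: "phi n x \<le> D (Q - 1) n / real Q + D (Q + 1) n / real Q" for n
  proof (cases "q \<in> pm_primes n m")
    case True
    have "phi n x = real n * (1 / real m * (1 / real Q))" using True x unfolding phi_def Q_def by simp
    also have "\<dots> \<le> real n * (1 * (1 / real Q))" using x(2) RQ
      by (intro mult_left_mono mult_right_mono) auto
    also have "\<dots> \<le> D (Q - 1) n / real Q + D (Q + 1) n / real Q"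
      using pm_dvd[OF True] RQ unfolding D_def Q_def by (auto simp: divide_simps)
    finally show ?thesis .
  next
    case False
    then show ?thesis using x RQ unfolding phi_def D_def by (auto intro!: add_nonneg_nonneg)
  qed
  have "(\<Sum>n\<in>{1..N}. phi n x) \<le> (\<Sum>n\<in>{1..N}. D (Q - 1) n / real Q + D (Q + 1) n / real Q)"
    using pt by (intro sum_mono) auto
  also have "\<dots> = ((\<Sum>n\<in>{1..N}. D (Q - 1) n) + (\<Sum>n\<in>{1..N}. D (Q + 1) n)) / real Q"
    by (simp add: sum.distrib sum_divide_distrib add_divide_distrib)
  also have "\<dots> \<le> (3 * real N powr (35/36) * real (Q - 1) powr (17/36) + 3 * real N powr (35/36) * real (Q + 1) powr (17/36)) / real Q"
    using Q4 assms(2) unfolding D_def by (intro divide_right_mono add_mono div_sum_bound) auto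
  also have "\<dots> \<le> (3 * real N powr (35/36) * (2 * real Q powr (17/36)) + 3 * real N powr (35/36) * (2 * real Q powr (17/36))) / real Q"
  proof -
    have b: "real M powr (17/36) \<le> 2 * real Q powr (17/36)" if "M \<le> 2 * Q" for M
    proof -
      have "real M powr (17/36) \<le> real (2 * Q) powr (17/36)" using that by (intro powr_mono2) auto
      also have "\<dots> = 2 powr (17/36) * real Q powr (17/36)" by (simp add: powr_mult)
      also have "\<dots> \<le> 2 * real Q powr (17/36)"
      proof -
        have "(2::real) powr (17/36) \<le> 2 powr 1" by (intro powr_mono) auto
        then show ?thesis by (intro mult_right_mono) auto
      qed
      finally show ?thesis .
    qed
    show ?thesis using Q4 RQ
      by (intro divide_right_mono add_mono mult_left_mono b) auto
  qed
  also have "\<dots> = 12 * real N powr (35/36) * (real Q powr (17/36) / real Q)"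
    by (simp add: field_simps)
  also have "real Q powr (17/36) / real Q = G x"
  proof -
    have q0: "real q > 0" using q2 by simp
    have "real Q = real q powr (real m)" unfolding Q_def using q0 by (simp add: powr_realpow)
    then have "real Q powr (17/36) / real Q = real q powr (real m * (17/36)) / real q powr (real m)"
      by (simp add: powr_powr)
    also have "\<dots> = real q powr (real m * (17/36) - real m)" by (rule powr_diff[symmetric])
    also have "real m * (17/36) - real m = -(19/36 * real m)" by simp
    finally show ?thesis using x by simp
  qed
  finally show ?thesis .
qed

definition Kc :: real where "Kc = infsum G PP"

lemma main_sum:
  assumes "N \<ge> 1"
  shows "(\<Sum>n\<in>{1..N}. real n * S n) \<le> 12 * Kc * real N powr (35/36)"
proof -
  have sw: "(\<lambda>x. \<Sum>n\<in>{1..N}. phi n x) summable_on PP \<and>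
       (\<Sum>n\<in>{1..N}. infsum (phi n) PP) = infsum (\<lambda>x. \<Sum>n\<in>{1..N}. phi n x) PP"
    by (rule infsum_finite_sum) (auto intro: phi_summable)
  have "(\<Sum>n\<in>{1..N}. real n * S n) = (\<Sum>n\<in>{1..N}. infsum (phi n) PP)" by (simp add: S_eq)
  also have "\<dots> = infsum (\<lambda>x. \<Sum>n\<in>{1..N}. phi n x) PP" using sw by simp
  also have "\<dots> \<le> infsum (\<lambda>x. 12 * real N powr (35/36) * G x) PP"
    using sw phi_sum_bound assms
    by (intro infsum_mono summable_on_cmult_right G_summable_PP) auto
  also have "\<dots> = 12 * real N powr (35/36) * Kc" unfolding Kc_def by (simp add: infsum_cmult_right')
  finally show ?thesis by (simp add: ac_simps)
qed



lemma Kc_nonneg: "Kc \<ge> 0"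
  unfolding Kc_def by (intro infsum_nonneg) auto

lemma count_bound:
  fixes x :: real
  assumes x1: "x \<ge> 1"
  defines "E \<equiv> {n. real n * S n > real n powr (-(1/72))}"
  shows "real (card {n\<in>E. real n \<le> x}) \<le> 12 * Kc * x powr (71/72)"
proof -
  define N where "N = nat \<lfloor>x\<rfloor>"
  have N1: "N \<ge> 1" unfolding N_def using x1 by linarith
  have Nx: "real N \<le> x" unfolding N_def using x1 by linarith
  define A where "A = {n\<in>E. real n \<le> x}"
  have AN: "A \<subseteq> {1..N}"
  proof
    fix n assume "n \<in> A"
    then have nE: "real n * S n > real n powr (-(1/72))" and nx: "real n \<le> x"
      unfolding A_def E_def by auto
    have "n \<noteq> 0"
    proof
      assume "n = 0" then show False using nE by simp
    qed
    moreover have "n \<le> N" unfolding N_def using nx by (simp add: le_nat_floor)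
    ultimately show "n \<in> {1..N}" by simp
  qed
  have finA: "finite A" using AN finite_subset by blast
  have pt: "1 \<le> x powr (1/72) * (real n * S n)" if "n \<in> A" for n
  proof -
    have nE: "real n * S n > real n powr (-(1/72))" and nx: "real n \<le> x"
      using that unfolding A_def E_def by auto
    have n1: "real n \<ge> 1" using that AN by auto
    have "x powr (-(1/72)) \<le> real n powr (-(1/72))" using n1 nx by (intro powr_mono2') auto
    also have "\<dots> \<le> real n * S n" using nE by simp
    finally have "x powr (1/72) * x powr (-(1/72)) \<le> x powr (1/72) * (real n * S n)"
      by (rule mult_left_mono) simp
    moreover have "x powr (1/72) * x powr (-(1/72)) = 1" using x1 by (simp add: powr_add[symmetric])
    ultimately show ?thesis by simp
  qed
  have "real (card A) = (\<Sum>n\<in>A. 1)" by simp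
  also have "\<dots> \<le> (\<Sum>n\<in>A. x powr (1/72) * (real n * S n))" using pt by (intro sum_mono) auto
  also have "\<dots> \<le> (\<Sum>n\<in>{1..N}. x powr (1/72) * (real n * S n))"
    using AN by (intro sum_mono2) (auto intro!: mult_nonneg_nonneg S_nonneg)
  also have "\<dots> = x powr (1/72) * (\<Sum>n\<in>{1..N}. real n * S n)" by (simp add: sum_distrib_left)
  also have "\<dots> \<le> x powr (1/72) * (12 * Kc * real N powr (35/36))"
    using main_sum[OF N1] by (intro mult_left_mono) auto
  also have "\<dots> \<le> x powr (1/72) * (12 * Kc * x powr (35/36))"
    using Nx N1 Kc_nonneg by (intro mult_left_mono powr_mono2) auto
  also have "\<dots> = 12 * Kc * (x powr (1/72) * x powr (35/36))" by (simp add: ac_simps)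
  also have "x powr (1/72) * x powr (35/36) = x powr (71/72)" by (simp add: powr_add[symmetric])
  finally show ?thesis unfolding A_def .
qed

theorem proposition1:
  shows "\<exists>E :: nat set.
     (\<lambda>x::real. real (card {n\<in>E. real n \<le> x})) \<in> o[at_top](\<lambda>x. x / ln x) \<and>
     S \<in> o[inf sequentially (principal (- E))](\<lambda>n. 1 / real n)"
proof (intro exI conjI)
  define E where "E = {n. real n * S n > real n powr (-(1/72))}"
  have "(\<lambda>x::real. real (card {n\<in>E. real n \<le> x})) \<in> O(\<lambda>x. x powr (71/72))"
  proof (rule bigoI)
    show "\<forall>\<^sub>F x in at_top. norm (real (card {n\<in>E. real n \<le> x})) \<le> 12 * Kc * norm (x powr (71/72))"
      using eventually_ge_at_top[of "1::real"]
    proof eventually_elim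
      case (elim x)
      then show ?case using count_bound[OF elim] unfolding E_def by simp
    qed
  qed
  moreover have "(\<lambda>x::real. x powr (71/72)) \<in> o(\<lambda>x. x / ln x)" by real_asymp
  ultimately show "(\<lambda>x::real. real (card {n\<in>E. real n \<le> x})) \<in> o(\<lambda>x. x / ln x)"
    by (rule landau_o.big_small_trans)
  show "S \<in> o[inf sequentially (principal (- E))](\<lambda>n. 1 / real n)"
  proof (rule landau_o.smallI)
    fix c :: real assume c: "c > 0"
    have lim: "((\<lambda>n. real n powr (-(1/72))) \<longlongrightarrow> 0) sequentially"
      by (rule tendsto_neg_powr) (auto intro: filterlim_real_sequentially)
    have ev: "\<forall>\<^sub>F n in sequentially. real n powr (-(1/72)) < c"
      using order_tendstoD(2)[OF lim c] .
    show "\<forall>\<^sub>F n in inf sequentially (principal (- E)). norm (S n) \<le> c * norm (1 / real n)"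
      unfolding eventually_inf_principal
      using ev eventually_ge_at_top[of "1::nat"]
    proof eventually_elim
      case (elim n)
      show ?case
      proof
        assume "n \<in> - E"
        then have "real n * S n \<le> real n powr (-(1/72))" unfolding E_def by auto
        with elim have "real n * S n \<le> c" by simp
        moreover have "real n > 0" using elim by simp
        ultimately have "S n \<le> c * (1 / real n)" by (simp add: field_simps)
        then show "norm (S n) \<le> c * norm (1 / real n)" using S_nonneg[of n] by simp
      qed
    qed
  qed
qed


end
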